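(* Let $F$ be the elementary cellular automaton with rule number 28. For every nonempty finite word $u\in\{0,1\}^*$, the deterministic communication complexity of $\textsc{SInv}_{F,u}$ restricted to inputs of length $n$ is bounded by a constant independent of $n$.
   Context: An elementary cellular automaton (ECA) with rule number $N\in\{0,\dots,255\}$ is the map $F:\{0,1\}^{\mathbb Z}\to\{0,1\}^{\mathbb Z}$ given by $F(x)_i=f(x_{i-1},x_i,x_{i+1})$. Here the local rule $f:\{0,1\}^3\to\{0,1\}$ is determined by $N=\sum_{a,b,c\in\{0,1\}}2^{4a+2b+c}f(a,b,c)$. For a nonempty finite word $u$, $p_u\in\{0,1\}^{\mathbb Z}$ is defined by $(p_u)_i=u_{i\bmod |u|}$. For a finite word $x$, $p_u[x]$ is the configuration equal to $x$ on positions $0,\dots,|x|-1$ and to $p_u$ elsewhere. $\textsc{SInv}_{F,u}$ is the decision problem: on input a finite word $x$, decide whether there is an integer $w$ such that for all $t\ge0$ the set of positions where $F^t(p_u)$ and $F^t(p_u[x])$ differ is contained in an interval of length $w$. For each $n$, it is regarded as a function $\{0,1\}^n\to\{0,1\}$. For a function $g:X\times Y\to Z$, $D(g)$ is the minimal depth of a deterministic two-party protocol computing $g$. In such a protocol, Alice knows $x$ and Bob knows $y$. The protocol is a binary tree: each internal node is labelled by a function of Alice's input only or of Bob's input only, with values in $\{\text{left},\text{right}\}$, and each leaf is labelled by an output value. For $g:\{0,1\}^m\to Z$, set $D(g)=\max_{0\le i<m}D(g_i)$, where $g_i:\{0,1\}^i\times\{0,1\}^{m-i}\to Z$ is $g_i(x,y)=g(xy)$.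 *)

theory Defs
  imports Main
begin

text \<open>Configurations in {0,1}^Z are modelled as int => bool (True = 1).
  Finite words are bool lists.\<close>

type_synonym config = "int \<Rightarrow> bool"

definition b2n :: "bool \<Rightarrow> nat" where
  "b2n b = (if b then 1 else 0)"

definition eca_local :: "nat \<Rightarrow> bool \<Rightarrow> bool \<Rightarrow> bool \<Rightarrow> bool" where
  "eca_local N a b c = odd (N div 2 ^ (4 * b2n a + 2 * b2n b + b2n c))"

definition eca :: "nat \<Rightarrow> config \<Rightarrow> config" where
  "eca N x = (\<lambda>i. eca_local N (x (i - 1)) (x i) (x (i + 1)))"

definition periodic :: "bool list \<Rightarrow> config" where
  "periodic u = (\<lambda>i. u ! nat (i mod int (length u)))"

definition patch :: "bool list \<Rightarrow> bool list \<Rightarrow> config" where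
  "patch u x = (\<lambda>i. if 0 \<le> i \<and> i < int (length x) then x ! nat i else periodic u i)"

definition SInv :: "nat \<Rightarrow> bool list \<Rightarrow> bool list \<Rightarrow> bool" where
  "SInv N u x = (\<exists>w::nat. \<forall>t::nat. \<exists>a::int.
     {i. (eca N ^^ t) (periodic u) i \<noteq> (eca N ^^ t) (patch u x) i} \<subseteq> {a..<a + int w})"

datatype ('a, 'b, 'z) protocol =
    Leaf 'z
  | AliceNode "'a \<Rightarrow> bool" "('a, 'b, 'z) protocol" "('a, 'b, 'z) protocol"
  | BobNode "'b \<Rightarrow> bool" "('a, 'b, 'z) protocol" "('a, 'b, 'z) protocol"

fun run :: "('a, 'b, 'z) protocol \<Rightarrow> 'a \<Rightarrow> 'b \<Rightarrow> 'z" where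
  "run (Leaf z) x y = z"
| "run (AliceNode f l r) x y = (if f x then run l x y else run r x y)"
| "run (BobNode f l r) x y = (if f y then run l x y else run r x y)"

fun depth :: "('a, 'b, 'z) protocol \<Rightarrow> nat" where
  "depth (Leaf z) = 0"
| "depth (AliceNode f l r) = Suc (max (depth l) (depth r))"
| "depth (BobNode f l r) = Suc (max (depth l) (depth r))"

definition D_split :: "(bool list \<Rightarrow> 'z) \<Rightarrow> nat \<Rightarrow> nat \<Rightarrow> nat" where
  "D_split g m i = (LEAST d. \<exists>P :: (bool list, bool list, 'z) protocol. depth P = d \<and>
      (\<forall>x y. length x = i \<longrightarrow> length y = m - i \<longrightarrow> run P x y = g (x @ y)))"

definition D :: "(bool list \<Rightarrow> 'z) \<Rightarrow> nat \<Rightarrow> nat" where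
  "D g m = Max (insert 0 {D_split g m i | i. i < m})"

end

theory Submission
  imports Defs
begin

lemma loc28: "eca_local 28 a b c = (if a then \<not>b \<and> \<not>c else b)"
  by (cases a; cases b; cases c) (simp_all add: eca_local_def b2n_def)

lemma eca28: "eca 28 x i = (if x (i-1) then \<not> x i \<and> \<not> x (i+1) else x i)"
  by (simp add: eca_def loc28)

lemma wall1: assumes "\<not> x (i-1)" "x i" shows "\<not> eca 28 x (i-1)" "eca 28 x i"
  using assms by (auto simp: eca28)

lemma wallt: assumes "\<not> x (i-1)" "x i"
  shows "\<not> (eca 28 ^^ t) x (i-1) \<and> (eca 28 ^^ t) x i"
proof (induction t)
  case 0 then show ?case using assms by simp
next
  case (Suc t) then show ?case using wall1[of "(eca 28 ^^ t) x" i] by simp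
qed

lemma right_step: assumes "\<forall>j\<ge>c. x j = y j" "\<not> x c" "x (c+1)"
  shows "\<forall>j\<ge>c. eca 28 x j = eca 28 y j"
proof (intro allI impI)
  fix j assume j: "j \<ge> c"
  show "eca 28 x j = eca 28 y j"
  proof (cases "j = c")
    case True
    then show ?thesis using assms by (auto simp: eca28)
  next
    case False
    then have "j - 1 \<ge> c" "j + 1 \<ge> c" using j by auto
    then show ?thesis using assms j by (simp add: eca28)
  qed
qed

lemma right_all: assumes "\<forall>j\<ge>c. x j = y j" "\<not> x c" "x (c+1)"
  shows "\<forall>j\<ge>c. (eca 28 ^^ t) x j = (eca 28 ^^ t) y j"
proof (induction t)
  case 0 then show ?case using assms by simp
next
  case (Suc t)
  have w: "\<not> (eca 28 ^^ t) x c \<and> (eca 28 ^^ t) x (c+1)"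
    using wallt[of x "c+1" t] assms by simp
  show ?case using right_step[OF Suc] w by simp
qed

lemma left_step: assumes "\<forall>j\<le>b. x j = y j" "\<not> x (b-1)" "x b"
  shows "\<forall>j\<le>b. eca 28 x j = eca 28 y j"
proof (intro allI impI)
  fix j assume j: "j \<le> b"
  show "eca 28 x j = eca 28 y j"
  proof (cases "j = b")
    case True
    then show ?thesis using assms wall1[of x b] wall1[of y b] by auto
  next
    case False
    then have "j - 1 \<le> b" "j + 1 \<le> b" using j by auto
    then show ?thesis using assms j by (simp add: eca28)
  qed
qed

lemma left_all: assumes "\<forall>j\<le>b. x j = y j" "\<not> x (b-1)" "x b"
  shows "\<forall>j\<le>b. (eca 28 ^^ t) x j = (eca 28 ^^ t) y j"
proof (induction t)
  case 0 then show ?case using assms by simp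
next
  case (Suc t)
  have w: "\<not> (eca 28 ^^ t) x (b-1) \<and> (eca 28 ^^ t) x b"
    using wallt[of x b t] assms by simp
  show ?case using left_step[OF Suc] w by simp
qed

lemma zero_fix: "(eca 28 ^^ t) (\<lambda>_. False) = (\<lambda>_. False)"
  by (induction t) (auto simp: eca28 fun_eq_iff)

lemma front: fixes q :: config assumes "q r" "\<forall>j>r. \<not> q j"
  shows "(eca 28 ^^ t) q (r + int t) \<and> (\<forall>j > r + int t. \<not> (eca 28 ^^ t) q j)"
proof (induction t)
  case 0 then show ?case using assms by simp
next
  case (Suc t)
  define Q where "Q = (eca 28 ^^ t) q"
  have IH: "Q (r + int t)" "\<forall>j > r + int t. \<not> Q j" using Suc unfolding Q_def by auto
  have e: "(eca 28 ^^ Suc t) q = eca 28 Q" unfolding Q_def by simp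
  have a: "eca 28 Q (r + int (Suc t))"
  proof -
    have "r + int (Suc t) - 1 = r + int t" by simp
    moreover have "\<not> Q (r + int (Suc t))" "\<not> Q (r + int (Suc t) + 1)" using IH(2) by auto
    ultimately show ?thesis using IH(1) eca28[of Q "r + int (Suc t)"] by simp
  qed
  have b: "\<forall>j > r + int (Suc t). \<not> eca 28 Q j"
  proof (intro allI impI)
    fix j assume "j > r + int (Suc t)"
    then have "j - 1 > r + int t" "j > r + int t" by auto
    then have "\<not> Q (j-1)" "\<not> Q j" using IH(2) by auto
    then show "\<not> eca 28 Q j" using eca28[of Q j] by simp
  qed
  show ?case using a b e by simp
qed

lemma unbounded: fixes q :: config assumes "\<not> q (l-1)" "q l" "q r" "l \<le> r" "\<forall>j>r. \<not> q j"
  shows "\<not> (\<exists>w::nat. \<forall>t::nat. \<exists>a::int. {i. False \<noteq> (eca 28 ^^ t) q i} \<subseteq> {a..<a + int w})"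
proof
  assume "\<exists>w::nat. \<forall>t::nat. \<exists>a::int. {i. False \<noteq> (eca 28 ^^ t) q i} \<subseteq> {a..<a + int w}"
  then obtain w where "\<forall>t::nat. \<exists>a::int. {i. False \<noteq> (eca 28 ^^ t) q i} \<subseteq> {a..<a + int w}" by blast
  then obtain a where A: "{i. False \<noteq> (eca 28 ^^ w) q i} \<subseteq> {a..<a + int w}" by blast
  have "(eca 28 ^^ w) q l" using wallt[of q l w] assms by simp
  then have "a \<le> l" using A by auto
  have "(eca 28 ^^ w) q (r + int w)" using front[of q r w] assms by simp
  then have "r + int w < a + int w" using A by auto
  then show False using \<open>a \<le> l\<close> assms(4) by simp
qed

lemma finsupp: fixes q :: config assumes "finite {j. q j}" "q j0"
  shows "\<exists>l r. \<not> q (l-1) \<and> q l \<and> q r \<and> l \<le> r \<and> (\<forall>j>r. \<not> q j)"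
proof -
  let ?S = "{j. q j}"
  have ne: "?S \<noteq> {}" using assms by auto
  define l where "l = Min ?S"
  define r where "r = Max ?S"
  have ql: "q l" unfolding l_def using Min_in[OF assms(1) ne] by simp
  have qr: "q r" unfolding r_def using Max_in[OF assms(1) ne] by simp
  have "\<not> q (l-1)"
  proof
    assume "q (l-1)" then have "l \<le> l - 1" unfolding l_def using Min_le[OF assms(1)] by (metis l_def mem_Collect_eq)
    then show False by simp
  qed
  moreover have "l \<le> r" unfolding l_def using Min_le[OF assms(1)] qr by simp
  moreover have "\<forall>j>r. \<not> q j" unfolding r_def using Max_ge[OF assms(1)] by fastforce
  ultimately show ?thesis using ql qr by blast
qed

lemma find_wall: fixes q :: config shows "\<not> q a \<Longrightarrow> q (a + int d + 1) \<Longrightarrow> \<exists>i. \<not> q i \<and> q (i+1)"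
proof (induction d arbitrary: a)
  case 0 then show ?case by auto
next
  case (Suc d)
  show ?case
  proof (cases "q (a+1)")
    case True then show ?thesis using Suc by auto
  next
    case False
    have "q ((a+1) + int d + 1)" using Suc(3) by (simp add: algebra_simps)
    then show ?thesis using Suc(1)[OF False] by blast
  qed
qed

lemma periodic_shift: "u \<noteq> [] \<Longrightarrow> periodic u (i + int (length u) * m) = periodic u i"
  by (simp add: periodic_def)

lemma periodic_const: assumes "u \<noteq> []" "\<forall>v\<in>set u. v = c"
  shows "periodic u = (\<lambda>_. c)"
proof
  fix i
  have "nat (i mod int (length u)) < length u" using assms(1) by (simp add: nat_less_iff)
  then show "periodic u i = c" using assms(2) by (simp add: periodic_def)
qed

lemma patch_out: "i < 0 \<or> i \<ge> int (length x) \<Longrightarrow> patch u x i = periodic u i"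
  by (auto simp: patch_def)

lemma mul_ge: "0 \<le> (z::int) \<Longrightarrow> 1 \<le> k \<Longrightarrow> z \<le> k * z"
  using mult_right_mono[of 1 k z] by simp

lemma SInv_nonconst: assumes "u \<noteq> []" "a0 < length u" "b0 < length u" "\<not> u ! a0" "u ! b0"
  shows "SInv 28 u x"
proof -
  let ?k = "int (length u)"
  let ?p = "periodic u"
  let ?q = "patch u x"
  let ?n = "int (length x)"
  have k1: "?k \<ge> 1" using assms(1) by (simp add: Suc_le_eq)
  have pa: "\<not> ?p (int a0)" using assms by (simp add: periodic_def)
  have "?p (int b0 + ?k * 1) = ?p (int b0)" using periodic_shift[OF assms(1)] by blast
  then have pb0: "?p (int b0 + ?k)" using assms by (simp add: periodic_def)
  have "int a0 + int (b0 + length u - a0 - 1) + 1 = int b0 + ?k" using assms by simp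
  then have pb: "?p (int a0 + int (b0 + length u - a0 - 1) + 1)" using pb0 by simp
  obtain i where wi: "\<not> ?p i" "?p (i+1)" using find_wall[of ?p, OF pa pb] by blast
  define c where "c = i + ?k * (\<bar>i\<bar> + ?n)"
  define e where "e = i - ?k * (\<bar>i\<bar> + 2)"
  have pc: "\<not> ?p c" "?p (c+1)"
    using wi periodic_shift[OF assms(1), of i "\<bar>i\<bar> + ?n"] periodic_shift[OF assms(1), of "i+1" "\<bar>i\<bar> + ?n"]
    unfolding c_def by (simp_all add: algebra_simps)
  have pe: "\<not> ?p e" "?p (e+1)"
    using wi periodic_shift[OF assms(1), of i "-(\<bar>i\<bar> + 2)"] periodic_shift[OF assms(1), of "i+1" "-(\<bar>i\<bar> + 2)"]
    unfolding e_def by (simp_all add: algebra_simps)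
  have "\<bar>i\<bar> + ?n \<le> ?k * (\<bar>i\<bar> + ?n)" using mul_ge[OF _ k1] by simp
  then have cn: "c \<ge> ?n" unfolding c_def by simp
  have "\<bar>i\<bar> + 2 \<le> ?k * (\<bar>i\<bar> + 2)" using mul_ge[OF _ k1] by simp
  then have en: "e + 1 \<le> -1" unfolding e_def by simp
  have agR: "\<forall>j\<ge>c. ?p j = ?q j" using cn patch_out[of _ x u] by simp
  have agL: "\<forall>j\<le>e+1. ?p j = ?q j" using en patch_out[of _ x u] by simp
  have R: "\<forall>j\<ge>c. (eca 28 ^^ t) ?p j = (eca 28 ^^ t) ?q j" for t
    using right_all[OF agR pc] .
  have L: "\<forall>j\<le>e+1. (eca 28 ^^ t) ?p j = (eca 28 ^^ t) ?q j" for t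
    using left_all[OF agL] pe by simp
  have sub: "{j. (eca 28 ^^ t) ?p j \<noteq> (eca 28 ^^ t) ?q j} \<subseteq> {e+2 ..< (e+2) + int (nat (c - e - 2))}" for t
  proof
    fix j assume "j \<in> {j. (eca 28 ^^ t) ?p j \<noteq> (eca 28 ^^ t) ?q j}"
    then have "\<not> j \<ge> c" "\<not> j \<le> e + 1" using R[of t] L[of t] by auto
    then show "j \<in> {e+2 ..< (e+2) + int (nat (c - e - 2))}" by simp
  qed
  show ?thesis unfolding SInv_def using sub by blast
qed

lemma patch_all: assumes "\<forall>v\<in>set x. v = c" "periodic u = (\<lambda>_. c)"
  shows "patch u x = periodic u"
proof
  fix i show "patch u x i = periodic u i"
  proof (cases "0 \<le> i \<and> i < int (length x)")
    case True
    then have "nat i < length x" by (simp add: nat_less_iff)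
    then have "x ! nat i = c" using assms(1) nth_mem by blast
    then show ?thesis using True assms(2) by (simp add: patch_def)
  qed (auto simp: patch_def)
qed

lemma SInv_triv: "patch u x = periodic u \<Longrightarrow> SInv N u x"
  unfolding SInv_def by (rule exI[of _ 0]) simp

lemma SInv_zero: assumes "periodic u = (\<lambda>_. False)"
  shows "SInv 28 u x = (\<forall>v\<in>set x. \<not> v)"
proof
  assume S: "SInv 28 u x"
  show "\<forall>v\<in>set x. \<not> v"
  proof (rule ccontr)
    assume "\<not> (\<forall>v\<in>set x. \<not> v)"
    then obtain i0 where i0: "i0 < length x" "x ! i0" by (metis in_set_conv_nth)
    let ?q = "patch u x"
    have q0: "?q (int i0)" using i0 by (simp add: patch_def)
    have "{j. ?q j} \<subseteq> {0..<int (length x)}" using assms by (auto simp: patch_def)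
    then have fin: "finite {j. ?q j}" using finite_subset by blast
    obtain l r where lr: "\<not> ?q (l-1)" "?q l" "?q r" "l \<le> r" "\<forall>j>r. \<not> ?q j"
      using finsupp[OF fin q0] by blast
    have "\<exists>w::nat. \<forall>t::nat. \<exists>a::int. {i. False \<noteq> (eca 28 ^^ t) ?q i} \<subseteq> {a..<a + int w}"
      using S unfolding SInv_def assms zero_fix by simp
    then show False using unbounded[OF lr] by blast
  qed
next
  assume "\<forall>v\<in>set x. \<not> v"
  then have "\<forall>v\<in>set x. v = False" by simp
  then show "SInv 28 u x" using SInv_triv patch_all assms by metis
qed

lemma SInv_one: assumes "periodic u = (\<lambda>_. True)"
  shows "SInv 28 u x = (\<forall>v\<in>set x. v)"
proof
  assume S: "SInv 28 u x"
  show "\<forall>v\<in>set x. v"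
  proof (rule ccontr)
    assume "\<not> (\<forall>v\<in>set x. v)"
    then obtain i0 where i0: "i0 < length x" "\<not> x ! i0" by (metis in_set_conv_nth)
    let ?I = "{i. i < length x \<and> \<not> x ! i}"
    define I where "I = Max ?I"
    have finI: "finite ?I" by simp
    have "I \<in> ?I" unfolding I_def using Max_in[OF finI] i0 by blast
    then have I: "I < length x" "\<not> x ! I" by auto
    have Imax: "\<And>i. i < length x \<Longrightarrow> \<not> x ! i \<Longrightarrow> i \<le> I" unfolding I_def using Max_ge[OF finI] by blast
    let ?q = "patch u x"
    define Q where "Q = eca 28 ?q"
    have qI: "\<not> ?q (int I)" using I by (simp add: patch_def)
    have qI1: "?q (int I + 1)"
    proof (cases "Suc I < length x")
      case True
      then have "x ! Suc I" using Imax[of "Suc I"] by fastforce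
      then show ?thesis using True by (simp add: patch_def nat_add_distrib)
    next
      case False
      then show ?thesis using assms by (simp add: patch_def)
    qed
    have Q0: "Q (int I + 1)" unfolding Q_def using qI qI1 eca28[of ?q "int I + 1"] by simp
    have "{j. Q j} \<subseteq> {0..int (length x)}"
    proof
      fix j assume jQ: "j \<in> {j. Q j}"
      show "j \<in> {0..int (length x)}"
      proof (rule ccontr)
        assume "j \<notin> {0..int (length x)}"
        then have "j - 1 < 0 \<or> j - 1 \<ge> int (length x)" "j < 0 \<or> j \<ge> int (length x)" by auto
        then have "?q (j-1)" "?q j" using assms patch_out[of _ x u] by auto
        then have "\<not> Q j" unfolding Q_def using eca28[of ?q j] by simp
        then show False using jQ by simp
      qed
    qed
    then have fin: "finite {j. Q j}" using finite_subset by blast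
    obtain l r where lr: "\<not> Q (l-1)" "Q l" "Q r" "l \<le> r" "\<forall>j>r. \<not> Q j"
      using finsupp[OF fin Q0] by blast
    from S obtain w where W: "\<forall>t::nat. \<exists>a::int.
     {i. (eca 28 ^^ t) (periodic u) i \<noteq> (eca 28 ^^ t) ?q i} \<subseteq> {a..<a + int w}"
      unfolding SInv_def by blast
    have e1: "eca 28 (\<lambda>_. True) = (\<lambda>_. False)" by (simp add: fun_eq_iff eca28)
    have "\<forall>t::nat. \<exists>a::int. {i. False \<noteq> (eca 28 ^^ t) Q i} \<subseteq> {a..<a + int w}"
    proof
      fix t
      obtain a where "{i. (eca 28 ^^ Suc t) (periodic u) i \<noteq> (eca 28 ^^ Suc t) ?q i} \<subseteq> {a..<a + int w}"
        using W by blast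
      moreover have "(eca 28 ^^ Suc t) (periodic u) = (\<lambda>_. False)"
        unfolding funpow_Suc_right assms by (simp add: e1 zero_fix)
      moreover have "(eca 28 ^^ Suc t) ?q = (eca 28 ^^ t) Q"
        unfolding funpow_Suc_right Q_def by simp
      ultimately show "\<exists>a::int. {i. False \<noteq> (eca 28 ^^ t) Q i} \<subseteq> {a..<a + int w}" by auto
    qed
    then show False using unbounded[OF lr] by blast
  qed
next
  assume "\<forall>v\<in>set x. v"
  then have "\<forall>v\<in>set x. v = True" by simp
  then show "SInv 28 u x" using SInv_triv patch_all assms by metis
qed

lemma D_bound: assumes "\<forall>xs. g xs = (\<forall>v\<in>set xs. R v)" shows "D g m \<le> 2"
proof -
  define P :: "(bool list, bool list, bool) protocol" where
    "P = AliceNode (\<lambda>x. \<forall>v\<in>set x. R v) (BobNode (\<lambda>y. \<forall>v\<in>set y. R v) (Leaf True) (Leaf False)) (Leaf False)"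
  have dP: "depth P = 2" unfolding P_def by simp
  have rP: "run P x y = g (x @ y)" for x y unfolding P_def using assms by auto
  have "D_split g m i \<le> 2" for i
    unfolding D_split_def by (rule Least_le, rule exI[of _ P]) (simp add: dP rP)
  moreover have "finite {D_split g m i | i. i < m}" by simp
  ultimately show ?thesis unfolding D_def by (auto intro: Max.boundedI)
qed

theorem mainTheorem6:
  fixes u :: "bool list"
  assumes "u \<noteq> []"
  shows "\<exists>C::nat. \<forall>n. D (SInv 28 u) n \<le> C"
proof -
  have "\<exists>R. \<forall>xs. SInv 28 u xs = (\<forall>v\<in>set xs. R v)"
  proof (cases "(\<exists>a0<length u. \<not> u ! a0) \<and> (\<exists>b0<length u. u ! b0)")
    case True
    then obtain a0 b0 where "a0 < length u" "\<not> u ! a0" "b0 < length u" "u ! b0" by blast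
    then have "\<forall>xs. SInv 28 u xs = (\<forall>v\<in>set xs. True)" using SInv_nonconst[OF assms] by simp
    then show ?thesis by (intro exI[of _ "\<lambda>_. True"]) simp
  next
    case False
    then have "(\<forall>a0<length u. u ! a0) \<or> (\<forall>b0<length u. \<not> u ! b0)" by blast
    then have "(\<forall>v\<in>set u. v = True) \<or> (\<forall>v\<in>set u. v = False)"
      by (auto simp: in_set_conv_nth)
    then show ?thesis
    proof
      assume "\<forall>v\<in>set u. v = True"
      then have pp: "periodic u = (\<lambda>_. True)" by (rule periodic_const[OF assms])
      have "\<forall>xs. SInv 28 u xs = (\<forall>v\<in>set xs. v)" using SInv_one[OF pp] by simp
      then show ?thesis by (intro exI[of _ "\<lambda>v. v"]) simp
    next
      assume "\<forall>v\<in>set u. v = False"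
      then have pp: "periodic u = (\<lambda>_. False)" by (rule periodic_const[OF assms])
      have "\<forall>xs. SInv 28 u xs = (\<forall>v\<in>set xs. \<not> v)" using SInv_zero[OF pp] by simp
      then show ?thesis by (intro exI[of _ "\<lambda>v. \<not> v"]) simp
    qed
  qed
  then obtain R where hR: "\<forall>xs. SInv 28 u xs = (\<forall>v\<in>set xs. R v)" by blast
  have "\<forall>n. D (SInv 28 u) n \<le> 2" using D_bound[OF hR] by blast
  then show ?thesis by (rule exI)
qed

end
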